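(* A finite, simple, connected graph $G$ is randomly weak total $3$-dimensional if and only if $G$ is a cycle of odd order.
   Context: $d(x,y)$ is the shortest-path distance. A set $W\subseteq V(G)$ is a resolving set if for every two distinct vertices $y,z$ there is $x\in W$ with $d(y,x)\ne d(z,x)$. A set $W$ is a weak total resolving set (WTR-set) if $W$ is resolving and, for every $w\in W$ and every $x\in V(G)\setminus W$, there is $w'\in W\setminus\{w\}$ with $d(x,w')\ne d(w,w')$. $\dim_{wt}(G)$ is the minimum cardinality of a WTR-set. The weak total resolving number $res_{wt}(G)$ is the minimum positive integer $r$ such that every set of $r$ vertices of $G$ is a WTR-set. $G$ is randomly weak total $k$-dimensional if $\dim_{wt}(G)=res_{wt}(G)=k$. *)

theory Defs
  imports Main
begin

definition simple_graph :: "'a set \<Rightarrow> ('a \<Rightarrow> 'a \<Rightarrow> bool) \<Rightarrow> bool" where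
  "simple_graph V E \<longleftrightarrow> finite V \<and> V \<noteq> {} \<and>
     (\<forall>x y. E x y \<longrightarrow> x \<in> V \<and> y \<in> V) \<and>
     (\<forall>x y. E x y \<longrightarrow> E y x) \<and> (\<forall>x. \<not> E x x)"

inductive walk :: "('a \<Rightarrow> 'a \<Rightarrow> bool) \<Rightarrow> nat \<Rightarrow> 'a \<Rightarrow> 'a \<Rightarrow> bool" for E where
  walk0: "walk E 0 x x"
| walkS: "E x y \<Longrightarrow> walk E n y z \<Longrightarrow> walk E (Suc n) x z"

definition connected_graph :: "'a set \<Rightarrow> ('a \<Rightarrow> 'a \<Rightarrow> bool) \<Rightarrow> bool" where
  "connected_graph V E \<longleftrightarrow> simple_graph V E \<and> (\<forall>x\<in>V. \<forall>y\<in>V. \<exists>n. walk E n x y)"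

definition gdist :: "('a \<Rightarrow> 'a \<Rightarrow> bool) \<Rightarrow> 'a \<Rightarrow> 'a \<Rightarrow> nat" where
  "gdist E x y = (LEAST n. walk E n x y)"

definition resolving_set :: "'a set \<Rightarrow> ('a \<Rightarrow> 'a \<Rightarrow> bool) \<Rightarrow> 'a set \<Rightarrow> bool" where
  "resolving_set V E W \<longleftrightarrow> W \<subseteq> V \<and>
     (\<forall>y\<in>V. \<forall>z\<in>V. y \<noteq> z \<longrightarrow> (\<exists>x\<in>W. gdist E y x \<noteq> gdist E z x))"

definition wtr_set :: "'a set \<Rightarrow> ('a \<Rightarrow> 'a \<Rightarrow> bool) \<Rightarrow> 'a set \<Rightarrow> bool" where
  "wtr_set V E W \<longleftrightarrow> resolving_set V E W \<and>
     (\<forall>w\<in>W. \<forall>x\<in>V - W. \<exists>w'\<in>W - {w}. gdist E x w' \<noteq> gdist E w w')"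

definition dim_wt :: "'a set \<Rightarrow> ('a \<Rightarrow> 'a \<Rightarrow> bool) \<Rightarrow> nat" where
  "dim_wt V E = (LEAST k. \<exists>W. wtr_set V E W \<and> card W = k)"

definition res_wt :: "'a set \<Rightarrow> ('a \<Rightarrow> 'a \<Rightarrow> bool) \<Rightarrow> nat" where
  "res_wt V E = (LEAST r. 0 < r \<and> (\<forall>W. W \<subseteq> V \<and> card W = r \<longrightarrow> wtr_set V E W))"

definition randomly_weak_total_dim :: "'a set \<Rightarrow> ('a \<Rightarrow> 'a \<Rightarrow> bool) \<Rightarrow> nat \<Rightarrow> bool" where
  "randomly_weak_total_dim V E k \<longleftrightarrow> dim_wt V E = k \<and> res_wt V E = k"

definition is_cycle_graph :: "'a set \<Rightarrow> ('a \<Rightarrow> 'a \<Rightarrow> bool) \<Rightarrow> bool" where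
  "is_cycle_graph V E \<longleftrightarrow> (\<exists>n f. 3 \<le> n \<and> bij_betw f {0..<n} V \<and>
     (\<forall>i<n. \<forall>j<n. E (f i) (f j) \<longleftrightarrow> (j = Suc i mod n \<or> i = Suc j mod n)))"

end

theory Submission
  imports Defs
begin



lemma walk_in: "walk E k x y \<Longrightarrow> simple_graph V E \<Longrightarrow> x \<in> V \<Longrightarrow> y \<in> V"
  by (induction rule: walk.induct) (auto simp: simple_graph_def)

lemma walk_snoc: "walk E m x y \<Longrightarrow> E y z \<Longrightarrow> walk E (Suc m) x z"
  by (induction rule: walk.induct) (auto intro: walk.intros)

lemma walk_sym: "walk E m x y \<Longrightarrow> \<forall>a b. E a b \<longrightarrow> E b a \<Longrightarrow> walk E m y x"
  by (induction rule: walk.induct) (auto intro: walk.intros walk_snoc)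

lemma walk_append: "walk E a x y \<Longrightarrow> walk E b y z \<Longrightarrow> walk E (a+b) x z"
  by (induction rule: walk.induct) (auto intro: walk.intros)

lemma walk_split: "walk E (a+b) x z \<Longrightarrow> \<exists>m. walk E a x m \<and> walk E b m z"
proof (induction a arbitrary: x)
  case 0 then show ?case by (auto intro: walk.intros)
next
  case (Suc a)
  from Suc.prems obtain y where "E x y" "walk E (a+b) y z"
    by (auto elim: walk.cases)
  with Suc.IH obtain m where "walk E a y m" "walk E b m z" by blast
  then show ?case using \<open>E x y\<close> by (auto intro: walk.intros)
qed

lemma walk0_iff: "walk E 0 x y \<longleftrightarrow> x = y"
  by (auto elim: walk.cases intro: walk.intros)

lemma walk1_iff: "walk E (Suc 0) x y \<longleftrightarrow> E x y"
  by (auto elim: walk.cases intro: walk.intros simp: walk0_iff)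

lemma gdist_le: "walk E k x y \<Longrightarrow> gdist E x y \<le> k"
  unfolding gdist_def by (rule Least_le)

lemma gdist_self: "gdist E x x = 0"
  using gdist_le[of E 0 x x] by (simp add: walk.intros)

context
  fixes V :: "'a set" and E
  assumes cg: "connected_graph V E"
begin

lemma sg: "simple_graph V E" using cg by (simp add: connected_graph_def)
lemma Esym: "E x y \<Longrightarrow> E y x" using sg by (simp add: simple_graph_def)
lemma Eirr: "\<not> E x x" using sg by (simp add: simple_graph_def)
lemma EV1: "E x y \<Longrightarrow> x \<in> V" using sg by (simp add: simple_graph_def)
lemma EV2: "E x y \<Longrightarrow> y \<in> V" using sg by (simp add: simple_graph_def)
lemma finV: "finite V" using sg by (simp add: simple_graph_def)

lemma gdist_walk: "x \<in> V \<Longrightarrow> y \<in> V \<Longrightarrow> walk E (gdist E x y) x y"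
  unfolding gdist_def using cg unfolding connected_graph_def by (meson LeastI_ex)


lemma gdist_eq0: "x \<in> V \<Longrightarrow> y \<in> V \<Longrightarrow> gdist E x y = 0 \<longleftrightarrow> x = y"
  using gdist_walk[of x y] by (auto simp: walk0_iff gdist_self)

lemma gdist_sym: "x \<in> V \<Longrightarrow> y \<in> V \<Longrightarrow> gdist E x y = gdist E y x"
proof -
  assume xy: "x \<in> V" "y \<in> V"
  have s: "\<forall>a b. E a b \<longrightarrow> E b a" using Esym by blast
  have "gdist E y x \<le> gdist E x y" by (rule gdist_le[OF walk_sym[OF gdist_walk[OF xy] s]])
  moreover have "gdist E x y \<le> gdist E y x" by (rule gdist_le[OF walk_sym[OF gdist_walk[OF xy(2,1)] s]])
  ultimately show ?thesis by simp
qed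

lemma gdist_tri: "x \<in> V \<Longrightarrow> y \<in> V \<Longrightarrow> z \<in> V \<Longrightarrow> gdist E x z \<le> gdist E x y + gdist E y z"
proof -
  assume h: "x \<in> V" "y \<in> V" "z \<in> V"
  have "walk E (gdist E x y + gdist E y z) x z"
    by (rule walk_append[OF gdist_walk[OF h(1,2)] gdist_walk[OF h(2,3)]])
  then show ?thesis by (rule gdist_le)
qed

lemma gdist_1: "x \<in> V \<Longrightarrow> y \<in> V \<Longrightarrow> gdist E x y = Suc 0 \<longleftrightarrow> E x y"
proof
  assume "x \<in> V" "y \<in> V" "gdist E x y = Suc 0"
  then show "E x y" using gdist_walk[of x y] by (simp add: walk1_iff)
next
  assume xy: "x \<in> V" "y \<in> V" "E x y"
  then have "gdist E x y \<le> Suc 0" using gdist_le[of E "Suc 0" x y] walk1_iff by metis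
  moreover have "x \<noteq> y" using xy Eirr by blast
  ultimately show "gdist E x y = Suc 0" using gdist_eq0[OF xy(1,2)] by linarith
qed

lemma gdist_split: "u \<in> V \<Longrightarrow> z \<in> V \<Longrightarrow> i \<le> gdist E u z \<Longrightarrow>
   \<exists>m\<in>V. gdist E u m = i \<and> gdist E m z = gdist E u z - i"
proof -
  assume uz: "u \<in> V" "z \<in> V" and i: "i \<le> gdist E u z"
  define D where "D = gdist E u z"
  have "walk E (i + (D - i)) u z" using gdist_walk[OF uz] i by (simp add: D_def)
  then obtain m where m: "walk E i u m" "walk E (D - i) m z" using walk_split[of E i "D - i" u z] by blast
  have mV: "m \<in> V" using walk_in[OF m(1) sg uz(1)] .
  have a: "gdist E u m \<le> i" using m(1) by (rule gdist_le)
  have b: "gdist E m z \<le> D - i" using m(2) by (rule gdist_le)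
  have c: "D \<le> gdist E u m + gdist E m z" using gdist_tri[OF uz(1) mV uz(2)] D_def by simp
  show ?thesis using a b c i mV D_def by (intro bexI[of _ m]) auto
qed

end



definition cdist :: "nat \<Rightarrow> nat \<Rightarrow> nat \<Rightarrow> nat" where
  "cdist n i j = min (if i \<le> j then j - i else i - j) (n - (if i \<le> j then j - i else i - j))"

lemma Suc_mod_eq: "i < n \<Longrightarrow> Suc i mod n = (if Suc i = n then 0 else Suc i)"
  by auto

lemma cd_step: "i < n \<Longrightarrow> i' < n \<Longrightarrow> j < n \<Longrightarrow> (i' = Suc i mod n \<or> i = Suc i' mod n) \<Longrightarrow>
  cdist n i j \<le> Suc (cdist n i' j)"
  apply (simp only: Suc_mod_eq)
  unfolding cdist_def by (auto split: if_splits)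

lemma cd_self: "cdist n i i = 0" by (simp add: cdist_def)

context
  fixes V :: "'a set" and E and f and n
  assumes cg: "connected_graph V E" and n3: "3 \<le> n" and bij: "bij_betw f {0..<n} V"
    and ec: "\<forall>i<n. \<forall>j<n. E (f i) (f j) \<longleftrightarrow> (j = Suc i mod n \<or> i = Suc j mod n)"
begin

lemma cyc_fwd: "i < n \<Longrightarrow> walk E m (f i) (f ((i+m) mod n))"
proof (induction m arbitrary: i)
  case 0 then show ?case by (simp add: walk.intros)
next
  case (Suc m)
  have n0: "0 < n" using n3 by simp
  have e: "E (f i) (f (Suc i mod n))" using ec Suc.prems n0 by simp
  have "walk E m (f (Suc i mod n)) (f ((Suc i mod n + m) mod n))"
    using Suc.IH n0 by simp
  moreover have "(Suc i mod n + m) mod n = (i + Suc m) mod n" by (simp add: mod_add_left_eq)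
  ultimately show ?case using e by (auto intro: walk.intros)
qed

lemma cyc_low: "walk E k x y \<Longrightarrow> \<forall>i j. i<n \<longrightarrow> j<n \<longrightarrow> x = f i \<longrightarrow> y = f j \<longrightarrow> cdist n i j \<le> k"
proof (induction rule: walk.induct)
  case (walk0 x)
  have "inj_on f {0..<n}" using bij bij_betw_def by blast
  then show ?case unfolding inj_on_def by (metis atLeastLessThan_iff cd_self le0 le_refl)
next
  case (walkS x y k z)
  show ?case
  proof (intro allI impI)
    fix i j assume ij: "i < n" "j < n" "x = f i" "z = f j"
    have "y \<in> V" using walkS.hyps(1) EV2[OF cg] by blast
    then obtain i' where i': "i' < n" "y = f i'" using bij unfolding bij_betw_def by auto
    have "cdist n i' j \<le> k" using walkS.IH i' ij by blast
    moreover have "i' = Suc i mod n \<or> i = Suc i' mod n" using ec ij i' walkS.hyps(1) by blast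
    ultimately show "cdist n i j \<le> Suc k" using cd_step[of i n i' j] ij i' by linarith
  qed
qed

lemma cyc_gdist: "i < n \<Longrightarrow> j < n \<Longrightarrow> gdist E (f i) (f j) = cdist n i j"
proof -
  assume ij: "i < n" "j < n"
  have fV: "f i \<in> V" "f j \<in> V" using ij bij bij_betw_apply by fastforce+
  have s: "\<forall>a b. E a b \<longrightarrow> E b a" using Esym[OF cg] by blast
  define a where "a = (if i \<le> j then j - i else j + n - i)"
  define b where "b = (if j \<le> i then i - j else i + n - j)"
  have "(i + a) mod n = j" using ij by (auto simp: a_def)
  then have wa: "walk E a (f i) (f j)" using cyc_fwd[OF ij(1), of a] by simp
  have "(j + b) mod n = i" using ij by (auto simp: b_def)
  then have "walk E b (f j) (f i)" using cyc_fwd[OF ij(2), of b] by simp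
  then have wb: "walk E b (f i) (f j)" using walk_sym[OF _ s] by blast
  have "cdist n i j = min a b" using ij unfolding cdist_def a_def b_def by auto
  then have le: "gdist E (f i) (f j) \<le> cdist n i j"
    using gdist_le[OF wa] gdist_le[OF wb] by (simp add: min_def)
  have "cdist n i j \<le> gdist E (f i) (f j)"
    using cyc_low[OF gdist_walk[OF cg fV]] ij by blast
  with le show ?thesis by simp
qed

end



lemma refl_cd: "i < n \<Longrightarrow> j < n \<Longrightarrow> p < n \<Longrightarrow> cdist n i p = cdist n j p \<Longrightarrow>
   i = j \<or> i + j = 2*p \<or> i + j = 2*p + n \<or> i + j + n = 2*p"
  unfolding cdist_def min_def by (simp split: if_splits; linarith)

lemma par1: "(x::nat) = 2*p + n \<Longrightarrow> odd n \<Longrightarrow> even x \<Longrightarrow> False" by presburger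
lemma par2: "(x::nat) + n = 2*p \<Longrightarrow> odd n \<Longrightarrow> even x \<Longrightarrow> False" by presburger
lemma par3: "(x::nat) = 2*p \<Longrightarrow> odd x \<Longrightarrow> False" by presburger

lemma oc1: "odd n \<Longrightarrow> i < n \<Longrightarrow> j < n \<Longrightarrow> p < n \<Longrightarrow> q < n \<Longrightarrow> p \<noteq> q \<Longrightarrow>
  cdist n i p = cdist n j p \<Longrightarrow> cdist n i q = cdist n j q \<Longrightarrow> i = j"
proof (rule ccontr)
  assume h: "odd n" "i < n" "j < n" "p < n" "q < n" "p \<noteq> q" "cdist n i p = cdist n j p" "cdist n i q = cdist n j q"
    and ne: "i \<noteq> j"
  have A: "i + j = 2*p \<or> i + j = 2*p + n \<or> i + j + n = 2*p" using refl_cd h ne by blast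
  have B: "i + j = 2*q \<or> i + j = 2*q + n \<or> i + j + n = 2*q" using refl_cd h ne by blast
  show False
  proof (cases "even (i+j)")
    case True
    then have "i + j = 2*p" "i + j = 2*q" using A B par1 par2 h(1) by blast+
    then show False using h(6) by simp
  next
    case False
    then have A': "i + j = 2*p + n \<or> i + j + n = 2*p" and B': "i + j = 2*q + n \<or> i + j + n = 2*q"
      using A B par3 by blast+
    have "p < q \<or> q < p" using h(6) by linarith
    then show False using A' B' h(4,5) by (elim disjE; linarith)
  qed
qed

lemma oc2: "odd n \<Longrightarrow> p < n \<Longrightarrow> q < n \<Longrightarrow> p \<noteq> q \<Longrightarrow>
  \<exists>r<n. r \<noteq> p \<and> r \<noteq> q \<and> cdist n r q = cdist n p q"
proof -
  assume h: "odd n" "p < n" "q < n" "p \<noteq> q"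
  have pq: "p < q \<or> q < p" using h(4) by linarith
  consider (c1) "p \<le> 2*q" "2*q - p < n" | (c2) "p \<le> 2*q" "n \<le> 2*q - p" | (c3) "2*q < p" by linarith
  then show ?thesis
  proof cases
    case c1
    have "2*q - p \<noteq> p" "2*q - p \<noteq> q" using pq c1 by (elim disjE; linarith)+
    moreover have "cdist n (2*q-p) q = cdist n p q" using c1 h unfolding cdist_def min_def
      by (simp split: if_splits; linarith)
    ultimately show ?thesis using c1 by blast
  next
    case c2
    have "2*q - p - n \<noteq> p"
    proof
      assume "2*q - p - n = p"
      then have "2*q = 2*p + n" using c2 by linarith
      then show False by (rule par1[OF _ h(1)]) simp_all
    qed
    moreover have "2*q - p - n \<noteq> q" "2*q - p - n < n" using pq c2 h by (elim disjE; linarith)+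
    moreover have "cdist n (2*q-p-n) q = cdist n p q" using c2 h unfolding cdist_def min_def
      by (simp split: if_splits; linarith)
    ultimately show ?thesis by blast
  next
    case c3
    have "2*q + n - p \<noteq> p"
    proof
      assume "2*q + n - p = p"
      then have "2*p = 2*q + n" using c3 by linarith
      then show False by (rule par1[OF _ h(1)]) simp_all
    qed
    moreover have "2*q + n - p \<noteq> q" "2*q + n - p < n" using pq c3 h by (elim disjE; linarith)+
    moreover have "cdist n (2*q+n-p) q = cdist n p q" using c3 h unfolding cdist_def min_def
      by (simp split: if_splits; linarith)
    ultimately show ?thesis by blast
  qed
qed

lemma ec4: "even n \<Longrightarrow> 3 \<le> n \<Longrightarrow> cdist n 2 (Suc (n div 2)) = cdist n 0 (Suc (n div 2))"
  unfolding cdist_def by (elim evenE) (simp add: min_def)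



context
  fixes V :: "'a set" and E and f and n
  assumes cg: "connected_graph V E" and n3: "3 \<le> n" and bij: "bij_betw f {0..<n} V"
    and ec: "\<forall>i<n. \<forall>j<n. E (f i) (f j) \<longleftrightarrow> (j = Suc i mod n \<or> i = Suc j mod n)"
begin

lemma cV: "y \<in> V \<Longrightarrow> \<exists>i<n. y = f i" using bij unfolding bij_betw_def by auto
lemma fV: "i < n \<Longrightarrow> f i \<in> V" using bij bij_betw_apply by fastforce
lemma finj: "i < n \<Longrightarrow> j < n \<Longrightarrow> f i = f j \<longleftrightarrow> i = j"
  using bij unfolding bij_betw_def inj_on_def by auto
lemma cardV: "card V = n" using bij bij_betw_same_card by fastforce

lemmas cg' = cyc_gdist[OF cg n3 bij ec]

lemma oc_res: "odd n \<Longrightarrow> a \<in> V \<Longrightarrow> b \<in> V \<Longrightarrow> a \<noteq> b \<Longrightarrow> y \<in> V \<Longrightarrow> z \<in> V \<Longrightarrow>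
   gdist E y a = gdist E z a \<Longrightarrow> gdist E y b = gdist E z b \<Longrightarrow> y = z"
proof -
  assume o: "odd n" and h: "a \<in> V" "b \<in> V" "a \<noteq> b" "y \<in> V" "z \<in> V"
    "gdist E y a = gdist E z a" "gdist E y b = gdist E z b"
  obtain p where p: "p < n" "a = f p" using cV h by blast
  obtain q where q: "q < n" "b = f q" using cV h by blast
  obtain i where i: "i < n" "y = f i" using cV h by blast
  obtain j where j: "j < n" "z = f j" using cV h by blast
  have "i = j" using oc1[OF o i(1) j(1) p(1) q(1)] h p q i j cg' by auto
  then show ?thesis using i j by simp
qed

lemma oc_eq: "odd n \<Longrightarrow> u \<in> V \<Longrightarrow> v \<in> V \<Longrightarrow> u \<noteq> v \<Longrightarrow>
   \<exists>x\<in>V. x \<noteq> u \<and> x \<noteq> v \<and> gdist E x v = gdist E u v"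
proof -
  assume o: "odd n" and h: "u \<in> V" "v \<in> V" "u \<noteq> v"
  obtain p where p: "p < n" "u = f p" using cV h by blast
  obtain q where q: "q < n" "v = f q" using cV h by blast
  have "p \<noteq> q" using h p q by auto
  then obtain r where r: "r < n" "r \<noteq> p" "r \<noteq> q" "cdist n r q = cdist n p q"
    using oc2[OF o p(1) q(1)] by blast
  have V: "f r \<in> V" using fV[OF r(1)] .
  have "f r \<noteq> u" "f r \<noteq> v" using r p q finj by auto
  moreover have "gdist E (f r) v = gdist E u v" using r p q cg' by simp
  ultimately show ?thesis using V by blast
qed

lemma oc_wtr3: "odd n \<Longrightarrow> W \<subseteq> V \<Longrightarrow> card W = 3 \<Longrightarrow> wtr_set V E W"
proof -
  assume o: "odd n" and W: "W \<subseteq> V" "card W = 3"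
  obtain a b c where abc: "W = {a,b,c}" "a \<noteq> b" "b \<noteq> c" "a \<noteq> c"
    using W(2) unfolding card_3_iff by blast
  have res: "resolving_set V E W"
    unfolding resolving_set_def
  proof (intro conjI ballI impI)
    show "W \<subseteq> V" using W(1) .
  next
    fix y z assume yz: "y \<in> V" "z \<in> V" "y \<noteq> z"
    have "a \<in> V" "b \<in> V" using W abc by auto
    then have "\<not> (gdist E y a = gdist E z a \<and> gdist E y b = gdist E z b)"
      using oc_res[OF o, of a b y z] abc yz by blast
    then show "\<exists>x\<in>W. gdist E y x \<noteq> gdist E z x" using abc by auto
  qed
  have "\<exists>w'\<in>W - {w}. gdist E x w' \<noteq> gdist E w w'" if "w \<in> W" "x \<in> V - W" for w x
  proof -
    have "W - {w} = {b,c} \<and> b \<noteq> c \<or> W - {w} = {a,c} \<and> a \<noteq> c \<or> W - {w} = {a,b} \<and> a \<noteq> b"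
      using that(1) abc by auto
    then obtain w1 w2 where ww: "W - {w} = {w1, w2}" "w1 \<noteq> w2" by blast
    have "w1 \<in> V" "w2 \<in> V" "w \<in> V" "x \<in> V" "x \<noteq> w" using ww W that by auto
    then have "\<not> (gdist E x w1 = gdist E w w1 \<and> gdist E x w2 = gdist E w w2)"
      using oc_res[OF o, of w1 w2 x w] ww by blast
    then show ?thesis using ww by auto
  qed
  then show ?thesis unfolding wtr_set_def using res by blast
qed

end



lemma wtr_sub: "wtr_set V E W \<Longrightarrow> W \<subseteq> V"
  by (simp add: wtr_set_def resolving_set_def)

context
  fixes V :: "'a set" and E and f and n
  assumes cg: "connected_graph V E" and n3: "3 \<le> n" and bij: "bij_betw f {0..<n} V"
    and ec: "\<forall>i<n. \<forall>j<n. E (f i) (f j) \<longleftrightarrow> (j = Suc i mod n \<or> i = Suc j mod n)"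
begin

lemmas fV' = fV[OF cg n3 bij ec] and finj' = finj[OF cg n3 bij ec]

lemma f01: "f 0 \<noteq> f 1" "f 0 \<in> V" "f 1 \<in> V" "f 2 \<in> V" "f 0 \<noteq> f 2" "f 1 \<noteq> f 2"
  using n3 fV' finj' by auto

lemma oc_small: "odd n \<Longrightarrow> W \<subseteq> V \<Longrightarrow> card W \<le> 2 \<Longrightarrow> \<not> wtr_set V E W"
proof
  assume o: "odd n" and W: "W \<subseteq> V" "card W \<le> 2" and wt: "wtr_set V E W"
  have finW: "finite W" using W finV[OF cg] finite_subset by blast
  have r: "resolving_set V E W" and t: "\<forall>w\<in>W. \<forall>x\<in>V - W. \<exists>w'\<in>W - {w}. gdist E x w' \<noteq> gdist E w w'"
    using wt by (auto simp: wtr_set_def)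
  consider "card W = 0" | "card W = 1" | "card W = 2" using W by linarith
  then show False
  proof cases
    case 1
    then have "W = {}" using finW by simp
    then show False using r f01 unfolding resolving_set_def by blast
  next
    case 2
    then obtain w where w: "W = {w}" using card_1_singletonE by blast
    have "\<exists>x. x \<in> V - W"
    proof (cases "w = f 0")
      case True then show ?thesis using w f01 by (intro exI[of _ "f 1"]) auto
    next
      case False then show ?thesis using w f01 by (intro exI[of _ "f 0"]) auto
    qed
    then obtain x where "x \<in> V - W" by blast
    then show False using t w by auto
  next
    case 3
    then obtain u v where uv: "W = {u, v}" "u \<noteq> v" unfolding card_2_iff by blast
    then obtain x where x: "x \<in> V" "x \<noteq> u" "x \<noteq> v" "gdist E x v = gdist E u v"
      using oc_eq[OF cg n3 bij ec o, of u v] W by auto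
    have "\<exists>w'\<in>W - {u}. gdist E x w' \<noteq> gdist E u w'" using t x uv by auto
    then show False using uv x by auto
  qed
qed

lemma oc_random: "odd n \<Longrightarrow> randomly_weak_total_dim V E 3"
proof -
  assume o: "odd n"
  have three: "card {f 0, f 1, f 2} = 3" "{f 0, f 1, f 2} \<subseteq> V" using f01 by auto
  have d: "dim_wt V E = 3"
    unfolding dim_wt_def
  proof (rule Least_equality)
    show "\<exists>W. wtr_set V E W \<and> card W = 3" using three oc_wtr3[OF cg n3 bij ec o] by blast
  next
    fix y assume "\<exists>W. wtr_set V E W \<and> card W = y"
    then obtain W where "wtr_set V E W" "card W = y" by blast
    then show "3 \<le> y" using oc_small[OF o] wtr_sub by (metis not_less_eq_eq numeral_2_eq_2 numeral_3_eq_3)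
  qed
  have r: "res_wt V E = 3"
    unfolding res_wt_def
  proof (rule Least_equality)
    show "0 < (3::nat) \<and> (\<forall>W. W \<subseteq> V \<and> card W = 3 \<longrightarrow> wtr_set V E W)"
      using oc_wtr3[OF cg n3 bij ec o] by auto
  next
    fix y :: nat assume y: "0 < y \<and> (\<forall>W. W \<subseteq> V \<and> card W = y \<longrightarrow> wtr_set V E W)"
    show "3 \<le> y"
    proof (rule ccontr)
      assume "\<not> 3 \<le> y"
      then consider "y = 1" | "y = 2" using y by linarith
      then show False
      proof cases
        case 1
        then have "wtr_set V E {f 0}" using y f01 by auto
        then show False using oc_small[OF o, of "{f 0}"] f01 by auto
      next
        case 2
        then have "wtr_set V E {f 0, f 1}" using y f01 by auto
        then show False using oc_small[OF o, of "{f 0, f 1}"] f01 by auto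
      qed
    qed
  qed
  show ?thesis using d r by (simp add: randomly_weak_total_dim_def)
qed

end



context
  fixes V :: "'a set" and E
  assumes cg: "connected_graph V E"
    and P3: "\<forall>W. W \<subseteq> V \<and> card W = 3 \<longrightarrow> wtr_set V E W"
    and no2: "\<not> (\<exists>W. wtr_set V E W \<and> card W = 2)"
    and n3: "3 \<le> card V"
begin

lemma Pq: "w \<in> V \<Longrightarrow> x \<in> V \<Longrightarrow> a \<in> V \<Longrightarrow> b \<in> V \<Longrightarrow> w \<noteq> x \<Longrightarrow> w \<noteq> a \<Longrightarrow> w \<noteq> b
  \<Longrightarrow> x \<noteq> a \<Longrightarrow> x \<noteq> b \<Longrightarrow> a \<noteq> b \<Longrightarrow> gdist E x a \<noteq> gdist E w a \<or> gdist E x b \<noteq> gdist E w b"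
proof -
  assume h: "w \<in> V" "x \<in> V" "a \<in> V" "b \<in> V" "w \<noteq> x" "w \<noteq> a" "w \<noteq> b" "x \<noteq> a" "x \<noteq> b" "a \<noteq> b"
  have "card {w, a, b} = 3" using h by auto
  then have "wtr_set V E {w,a,b}" using P3 h by auto
  then have "\<exists>w'\<in>{w,a,b} - {w}. gdist E x w' \<noteq> gdist E w w'" unfolding wtr_set_def using h by auto
  then show ?thesis using h by auto
qed

lemma two_nb: "E v x \<Longrightarrow> E v y \<Longrightarrow> x \<noteq> y \<Longrightarrow> gdist E x y = (if E x y then 1 else 2)"
proof -
  assume h: "E v x" "E v y" "x \<noteq> y"
  have V: "v \<in> V" "x \<in> V" "y \<in> V" using h EV1[OF cg] EV2[OF cg] by blast+
  show ?thesis
  proof (cases "E x y")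
    case True then show ?thesis using gdist_1[OF cg V(2,3)] by simp
  next
    case False
    have "gdist E x v = 1" "gdist E v y = 1" using gdist_1[OF cg] V h Esym[OF cg] by auto
    then have "gdist E x y \<le> 2" using gdist_tri[OF cg V(2,1,3)] by simp
    moreover have "gdist E x y \<noteq> 0" using gdist_eq0[OF cg V(2,3)] h by simp
    moreover have "gdist E x y \<noteq> 1" using gdist_1[OF cg V(2,3)] False by simp
    ultimately show ?thesis using False by simp
  qed
qed

lemma deg_le2: "E v a \<Longrightarrow> E v b \<Longrightarrow> E v c \<Longrightarrow> a = b \<or> a = c \<or> b = c"
proof (rule ccontr)
  assume h: "E v a" "E v b" "E v c" "\<not> (a = b \<or> a = c \<or> b = c)"
  have V: "v \<in> V" "a \<in> V" "b \<in> V" "c \<in> V" using h EV1[OF cg] EV2[OF cg] by blast+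
  have nv: "v \<noteq> a" "v \<noteq> b" "v \<noteq> c" using h Eirr[OF cg] by auto
  have g1: "gdist E a v = 1" "gdist E b v = 1" "gdist E c v = 1"
    using gdist_1[OF cg] V h Esym[OF cg] by auto
  have s: "\<And>x y. E x y = E y x" using Esym[OF cg] by blast
  have d1: "gdist E b c \<noteq> gdist E a c" using Pq[of a b v c] V nv h g1 by auto
  have d2: "gdist E c b \<noteq> gdist E a b" using Pq[of a c v b] V nv h g1 by auto
  have d3: "gdist E c a \<noteq> gdist E b a" using Pq[of b c v a] V nv h g1 by auto
  have "E b c \<noteq> E a c" using d1 two_nb[of v b c] two_nb[of v a c] h by (auto split: if_splits)
  moreover have "E c b \<noteq> E a b" using d2 two_nb[of v c b] two_nb[of v a b] h by (auto split: if_splits)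
  moreover have "E c a \<noteq> E b a" using d3 two_nb[of v c a] two_nb[of v b a] h by (auto split: if_splits)
  moreover have "E c b = E b c" "E c a = E a c" "E b a = E a b" using Esym[OF cg] by blast+
  ultimately show False by auto
qed

lemma has_nb: "v \<in> V \<Longrightarrow> \<exists>a. E v a"
proof -
  assume v: "v \<in> V"
  have "\<not> V \<subseteq> {v}"
  proof
    assume "V \<subseteq> {v}"
    then have "card V \<le> card {v}" by (rule card_mono[rotated]) simp
    then show False using n3 by simp
  qed
  then obtain u where u: "u \<in> V" "u \<noteq> v" by blast
  obtain k where "walk E k v u" using cg v u unfolding connected_graph_def by blast
  then show ?thesis using u(2) by (cases rule: walk.cases) auto
qed


lemma not_single: "v \<in> V \<Longrightarrow> \<exists>u\<in>V. u \<noteq> v"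
proof -
  assume v: "v \<in> V"
  have "\<not> V \<subseteq> {v}"
  proof
    assume "V \<subseteq> {v}"
    then have "card V \<le> card {v}" by (rule card_mono[rotated]) simp
    then show False using n3 by simp
  qed
  then show ?thesis by blast
qed

lemma layer_pred: "u \<in> V \<Longrightarrow> y \<in> V \<Longrightarrow> gdist E u y = Suc k \<Longrightarrow> \<exists>p\<in>V. E p y \<and> gdist E u p = k"
proof -
  assume h: "u \<in> V" "y \<in> V" "gdist E u y = Suc k"
  obtain m where m: "m \<in> V" "gdist E u m = k" "gdist E m y = Suc k - k"
    using gdist_split[OF cg h(1,2), of k] h(3) by auto
  then have "E m y" using gdist_1[OF cg m(1) h(2)] by simp
  then show ?thesis using m by blast
qed

lemma no_leaf: "u \<in> V \<Longrightarrow> \<forall>a b. E u a \<longrightarrow> E u b \<longrightarrow> a = b \<Longrightarrow> False"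
proof -
  assume u: "u \<in> V" and leaf: "\<forall>a b. E u a \<longrightarrow> E u b \<longrightarrow> a = b"
  have L: "\<forall>y y'. y \<in> V \<longrightarrow> y' \<in> V \<longrightarrow> gdist E u y = k \<longrightarrow> gdist E u y' = k \<longrightarrow> y = y'" for k
  proof (induction k rule: less_induct)
    case (less k)
    show ?case
    proof (intro allI impI)
      fix y y' assume yy: "y \<in> V" "y' \<in> V" "gdist E u y = k" "gdist E u y' = k"
      consider "k = 0" | "k = Suc 0" | k' where "k = Suc (Suc k')" by (metis not0_implies_Suc)
      then show "y = y'"
      proof cases
        case 1 then show ?thesis using yy gdist_eq0[OF cg u] by auto
      next
        case 2
        then have "E u y" "E u y'" using yy gdist_1[OF cg u] by auto
        then show ?thesis using leaf by blast
      next
        case 3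
        obtain p where p: "p \<in> V" "E p y" "gdist E u p = Suc k'" using layer_pred[OF u yy(1)] yy(3) 3 by blast
        obtain p' where p': "p' \<in> V" "E p' y'" "gdist E u p' = Suc k'" using layer_pred[OF u yy(2)] yy(4) 3 by blast
        have "p = p'" using less.IH[of "Suc k'"] 3 p p' by blast
        obtain q where q: "q \<in> V" "E q p" "gdist E u q = k'" using layer_pred[OF u p(1)] p(3) by blast
        have "q = y \<or> q = y' \<or> y = y'" using deg_le2[of p q y y'] q(2) p(2) p'(2) \<open>p = p'\<close> Esym[OF cg] by blast
        then show ?thesis using q yy 3 by auto
      qed
    qed
  qed
  define D where "D = Max (gdist E u ` V)"
  have finV': "finite (gdist E u ` V)" using finV[OF cg] by simp
  have "D \<in> gdist E u ` V" unfolding D_def using finV' u by (intro Max_in) auto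
  then obtain z where z: "z \<in> V" "gdist E u z = D" by auto
  have Dge: "gdist E u x \<le> D" if "x \<in> V" for x unfolding D_def using finV' that by simp
  have uz: "u \<noteq> z"
  proof
    assume "u = z"
    then have D0: "D = 0" using z gdist_self[of E z] by simp
    obtain x where x: "x \<in> V" "x \<noteq> u" using not_single[OF u] by blast
    have "gdist E u x = 0" using Dge[OF x(1)] D0 by simp
    then show False using gdist_eq0[OF cg u x(1)] x by simp
  qed
  have wt: "wtr_set V E {u, z}"
    unfolding wtr_set_def resolving_set_def
  proof (intro conjI ballI impI)
    show "{u, z} \<subseteq> V" using u z by simp
  next
    fix y y' assume yy: "y \<in> V" "y' \<in> V" "y \<noteq> y'"
    have "gdist E y u \<noteq> gdist E y' u"
      using L yy gdist_sym[OF cg u yy(1)] gdist_sym[OF cg u yy(2)] by metis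
    then show "\<exists>x\<in>{u, z}. gdist E y x \<noteq> gdist E y' x" by blast
  next
    fix w x assume w: "w \<in> {u, z}" and x: "x \<in> V - {u, z}"
    have xV: "x \<in> V" "x \<noteq> u" "x \<noteq> z" using x by auto
    show "\<exists>w'\<in>{u, z} - {w}. gdist E x w' \<noteq> gdist E w w'"
    proof (cases "w = u")
      case True
      define i where "i = gdist E u x"
      have i: "i \<le> gdist E u z" using Dge[OF xV(1)] z i_def by simp
      obtain m where m: "m \<in> V" "gdist E u m = i" "gdist E m z = gdist E u z - i"
        using gdist_split[OF cg u z(1) i] by blast
      have "m = x" using L m xV i_def by blast
      moreover have "i \<noteq> 0" using gdist_eq0[OF cg u xV(1)] xV i_def by simp
      ultimately have "gdist E x z < gdist E u z" using m i by simp
      then show ?thesis using True uz by auto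
    next
      case False
      then have wz: "w = z" using w by simp
      have "gdist E u x \<noteq> gdist E u z" using L xV z by blast
      then have "gdist E x u \<noteq> gdist E z u"
        using gdist_sym[OF cg u xV(1)] gdist_sym[OF cg u z(1)] by simp
      then show ?thesis using wz uz by auto
    qed
  qed
  moreover have "card {u, z} = 2" using uz by simp
  ultimately show False using no2 by blast
qed

end



primrec cseq :: "('a \<Rightarrow> 'a \<Rightarrow> bool) \<Rightarrow> 'a \<Rightarrow> 'a \<Rightarrow> nat \<Rightarrow> 'a \<times> 'a" where
  "cseq E x y 0 = (x, y)"
| "cseq E x y (Suc k) = (snd (cseq E x y k), SOME z. E (snd (cseq E x y k)) z \<and> z \<noteq> fst (cseq E x y k))"

context
  fixes V :: "'a set" and E and v0 a0
  assumes cg: "connected_graph V E"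
    and D2: "\<forall>v\<in>V. \<exists>a b. a \<noteq> b \<and> E v a \<and> E v b \<and> (\<forall>c. E v c \<longrightarrow> c = a \<or> c = b)"
    and v0: "v0 \<in> V" and a0: "E v0 a0"
begin

definition "ff k = fst (cseq E v0 a0 k)"

lemma ff_snd: "snd (cseq E v0 a0 k) = ff (Suc k)" by (simp add: ff_def)
lemma ff_0: "ff 0 = v0" by (simp add: ff_def)
lemma ff_1: "ff (Suc 0) = a0" by (simp add: ff_def)
lemma ff_rec: "ff (Suc (Suc k)) = (SOME z. E (ff (Suc k)) z \<and> z \<noteq> ff k)"
  by (simp add: ff_def)

lemma nb3: "E v p \<Longrightarrow> E v q \<Longrightarrow> p \<noteq> q \<Longrightarrow> E v c \<Longrightarrow> c = p \<or> c = q"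
proof -
  assume h: "E v p" "E v q" "p \<noteq> q" "E v c"
  have "v \<in> V" using EV1[OF cg] h by blast
  then obtain a b where "a \<noteq> b" "E v a" "E v b" "\<forall>c. E v c \<longrightarrow> c = a \<or> c = b" using D2 by blast
  then show ?thesis using h by metis
qed

lemma other_nb: "E x y \<Longrightarrow> \<exists>z. E y z \<and> z \<noteq> x"
proof -
  assume h: "E x y"
  have "y \<in> V" using EV2[OF cg] h by blast
  then obtain a b where "a \<noteq> b" "E y a" "E y b" using D2 by blast
  then show ?thesis by blast
qed

lemma ffE: "E (ff k) (ff (Suc k))"
proof (induction k)
  case 0 then show ?case using a0 ff_0 ff_1 by simp
next
  case (Suc k)
  show ?case unfolding ff_rec[of k] using someI_ex[OF other_nb[OF Suc.IH]] by blast
qed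

lemma ffne: "ff (Suc (Suc k)) \<noteq> ff k"
  unfolding ff_rec[of k] using someI_ex[OF other_nb[OF ffE[of k]]] by blast

lemma ffV: "ff k \<in> V" using EV1[OF cg ffE[of k]] .

lemma ffirr: "ff (Suc k) \<noteq> ff k" using ffE[of k] Eirr[OF cg] by metis

lemma ffnb: "E (ff (Suc k)) c \<Longrightarrow> c = ff k \<or> c = ff (Suc (Suc k))"
  using nb3[of "ff (Suc k)" "ff k" "ff (Suc (Suc k))" c] ffE[of k] ffE[of "Suc k"] ffne[of k] Esym[OF cg]
  by metis

lemma cycle_exists: "is_cycle_graph V E"
proof -
  have "\<not> inj ff"
  proof
    assume "inj ff"
    then have "infinite (range ff)" using finite_imageD by blast
    moreover have "range ff \<subseteq> V" using ffV by blast
    ultimately show False using finV[OF cg] finite_subset by blast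
  qed
  then obtain i j where "i \<noteq> j" "ff i = ff j" unfolding inj_def by blast
  then have ex: "\<exists>j. \<exists>i<j. ff i = ff j" by (metis linorder_neqE_nat)
  define n where "n = (LEAST j. \<exists>i<j. ff i = ff j)"
  obtain i0 where i0: "i0 < n" "ff i0 = ff n" using LeastI_ex[OF ex] unfolding n_def by blast
  have minl: "\<And>j i. j < n \<Longrightarrow> i < j \<Longrightarrow> ff i \<noteq> ff j"
    unfolding n_def using not_less_Least by blast
  obtain n' where n': "n = Suc n'" using i0 by (metis less_imp_Suc_add)
  have i00: "i0 = 0"
  proof (rule ccontr)
    assume "i0 \<noteq> 0"
    then obtain i' where i': "i0 = Suc i'" by (metis not0_implies_Suc)
    have "E (ff (Suc i')) (ff n')" using ffE[of n'] n' i' i0 Esym[OF cg] by metis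
    then have "ff n' = ff i' \<or> ff n' = ff (Suc (Suc i'))" using ffnb by blast
    then show False
    proof
      assume "ff n' = ff i'"
      then show False using minl[of n' i'] n' i' i0 by auto
    next
      assume a: "ff n' = ff (Suc (Suc i'))"
      consider "Suc (Suc i') < n'" | "Suc (Suc i') = n'" | "n' = Suc i'" using i0 n' i' by linarith
      then show False
      proof cases
        case 1 then show False using minl[of n' "Suc (Suc i')"] a n' by auto
      next
        case 2 then show False using ffne[of i0] i' i0 n' by auto
      next
        case 3 then show False using ffirr[of i0] i' i0 n' by auto
      qed
    qed
  qed
  have ffn: "ff n = ff 0" using i0 i00 by simp
  have n3: "3 \<le> n"
  proof -
    have "n \<noteq> 1" using ffirr[of 0] ffn by auto
    moreover have "n \<noteq> 2" using ffne[of 0] ffn by (auto simp: numeral_2_eq_2)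
    ultimately show ?thesis using n' by linarith
  qed
  have inj: "inj_on ff {0..<n}"
    unfolding inj_on_def by (metis atLeastLessThan_iff linorder_neqE_nat minl)
  have nb0: "E (ff 0) c \<Longrightarrow> c = ff 1 \<or> c = ff n'" for c
  proof -
    assume c: "E (ff 0) c"
    have "E (ff 0) (ff n')" using ffE[of n'] n' ffn Esym[OF cg] by metis
    moreover have "ff 1 \<noteq> ff n'"
    proof
      assume h: "ff 1 = ff n'"
      have "1 = n'" by (rule inj_onD[OF inj h]) (use n3 n' in auto)
      then show False using n3 n' by simp
    qed
    ultimately show ?thesis using nb3[OF ffE[of 0] _ _ c] by simp
  qed
  have closed: "y \<in> ff ` {0..<n} \<Longrightarrow> E y c \<Longrightarrow> c \<in> ff ` {0..<n}" for y c
  proof -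
    assume y: "y \<in> ff ` {0..<n}" and c: "E y c"
    then obtain i where i: "i < n" "y = ff i" by auto
    show ?thesis
    proof (cases i)
      case 0
      then have "c = ff 1 \<or> c = ff n'" using nb0 c i by simp
      then show ?thesis using n3 n' by auto
    next
      case (Suc i')
      then have "c = ff i' \<or> c = ff (Suc i)" using ffnb c i by simp
      then show ?thesis
      proof
        assume "c = ff i'" then show ?thesis using Suc i by auto
      next
        assume ci: "c = ff (Suc i)"
        show ?thesis
        proof (cases "Suc i = n")
          case True then show ?thesis using ci ffn n3 by auto
        next
          case False then show ?thesis using ci i by auto
        qed
      qed
    qed
  qed
  have walkS: "walk E k y x \<Longrightarrow> y \<in> ff ` {0..<n} \<Longrightarrow> x \<in> ff ` {0..<n}" for k y x
    by (induction rule: walk.induct) (auto intro: closed)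
  have img: "ff ` {0..<n} = V"
  proof
    show "ff ` {0..<n} \<subseteq> V" using ffV by blast
  next
    show "V \<subseteq> ff ` {0..<n}"
    proof
      fix x assume x: "x \<in> V"
      obtain k where "walk E k v0 x" using cg v0 x unfolding connected_graph_def by blast
      moreover have "v0 \<in> ff ` {0..<n}" using ff_0 n3 by (intro image_eqI[of _ _ 0]) auto
      ultimately show "x \<in> ff ` {0..<n}" using walkS by blast
    qed
  qed
  have bij: "bij_betw ff {0..<n} V" using inj img by (simp add: bij_betw_def)
  have injx: "i < n \<Longrightarrow> j < n \<Longrightarrow> ff i = ff j \<Longrightarrow> i = j" for i j using inj unfolding inj_on_def by auto
  have fS: "i < n \<Longrightarrow> ff (Suc i mod n) = ff (Suc i)" for i
    using ffn by (cases "Suc i = n") auto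
  have ec: "\<forall>i<n. \<forall>j<n. E (ff i) (ff j) \<longleftrightarrow> (j = Suc i mod n \<or> i = Suc j mod n)"
  proof (intro allI impI iffI)
    fix i j assume ij: "i < n" "j < n" and e: "E (ff i) (ff j)"
    show "j = Suc i mod n \<or> i = Suc j mod n"
    proof (cases i)
      case 0
      then have "ff j = ff 1 \<or> ff j = ff n'" using nb0 e by simp
      then show ?thesis
      proof
        assume "ff j = ff 1"
        then have "j = 1" using injx ij n3 by auto
        then show ?thesis using 0 n3 by auto
      next
        assume "ff j = ff n'"
        then have "j = n'" using injx ij n' by auto
        then show ?thesis using 0 n' by auto
      qed
    next
      case (Suc i')
      then have "ff j = ff i' \<or> ff j = ff (Suc i)" using ffnb e by simp
      then show ?thesis
      proof
        assume "ff j = ff i'"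
        then have "j = i'" using injx ij Suc by auto
        then show ?thesis using Suc ij by auto
      next
        assume "ff j = ff (Suc i)"
        then have "ff j = ff (Suc i mod n)" using fS ij by simp
        then have "j = Suc i mod n" using injx ij n3 by auto
        then show ?thesis by simp
      qed
    qed
  next
    fix i j assume ij: "i < n" "j < n" and h: "j = Suc i mod n \<or> i = Suc j mod n"
    from h show "E (ff i) (ff j)"
    proof
      assume "j = Suc i mod n"
      then show ?thesis using fS[OF ij(1)] ffE[of i] by simp
    next
      assume "i = Suc j mod n"
      then have "E (ff j) (ff i)" using fS[OF ij(2)] ffE[of j] by simp
      then show ?thesis using Esym[OF cg] by blast
    qed
  qed
  show ?thesis unfolding is_cycle_graph_def using n3 bij ec by blast
qed

end



lemma even_bad:
  assumes cg: "connected_graph V E" and n3: "3 \<le> n" and bij: "bij_betw f {0..<n} V"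
    and ec: "\<forall>i<n. \<forall>j<n. E (f i) (f j) \<longleftrightarrow> (j = Suc i mod n \<or> i = Suc j mod n)"
    and ev: "even n"
  shows "\<exists>W. W \<subseteq> V \<and> card W = 3 \<and> \<not> wtr_set V E W"
proof -
  obtain m where m: "n = 2*m" using ev by blast
  have m2: "2 \<le> m" using m n3 by linarith
  define k where "k = Suc (n div 2)"
  have k: "k = Suc m" "k < n" using m m2 k_def by auto
  note fV = fV[OF cg n3 bij ec] and finj = finj[OF cg n3 bij ec] and cgd = cg'[OF cg n3 bij ec]
  let ?W = "{f 0, f 1, f k}"
  have d: "f 0 \<noteq> f 1" "f 0 \<noteq> f k" "f 1 \<noteq> f k" "f 2 \<noteq> f 0" "f 2 \<noteq> f 1" "f 2 \<noteq> f k"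
    using finj k m2 n3 by auto
  have sub: "?W \<subseteq> V" using fV k n3 by auto
  have c: "card ?W = 3" using d by auto
  have e1: "gdist E (f 2) (f 1) = gdist E (f 0) (f 1)" using cgd n3 by (simp add: cdist_def)
  have e2: "gdist E (f 2) (f k) = gdist E (f 0) (f k)" using cgd n3 k ec4[OF ev n3] k_def by simp
  have "\<not> wtr_set V E ?W"
  proof
    assume "wtr_set V E ?W"
    moreover have "f 0 \<in> ?W" by simp
    moreover have "f 2 \<in> V - ?W" using fV n3 d by auto
    ultimately obtain w' where "w' \<in> ?W - {f 0}" "gdist E (f 2) w' \<noteq> gdist E (f 0) w'"
      unfolding wtr_set_def by blast
    then show False using e1 e2 by auto
  qed
  then show ?thesis using sub c by blast
qed

lemma V_wtr: "connected_graph V E \<Longrightarrow> wtr_set V E V"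
  unfolding wtr_set_def resolving_set_def
proof (intro conjI ballI impI)
  assume cg: "connected_graph V E"
  fix y z assume yz: "y \<in> V" "z \<in> V" "y \<noteq> z"
  have "gdist E y y \<noteq> gdist E z y" using gdist_self[of E y] gdist_eq0[OF cg yz(2,1)] yz by simp
  then show "\<exists>x\<in>V. gdist E y x \<noteq> gdist E z x" using yz by blast
qed auto

theorem corollary5:
  fixes V :: "'a set" and E :: "'a \<Rightarrow> 'a \<Rightarrow> bool"
  assumes "connected_graph V E"
  shows "randomly_weak_total_dim V E 3 \<longleftrightarrow> is_cycle_graph V E \<and> odd (card V)"
proof
  note cg = assms
  assume R: "randomly_weak_total_dim V E 3"
  then have dim: "dim_wt V E = 3" and res: "res_wt V E = 3" by (auto simp: randomly_weak_total_dim_def)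
  have exr: "\<exists>r. 0 < r \<and> (\<forall>W. W \<subseteq> V \<and> card W = r \<longrightarrow> wtr_set V E W)"
  proof (intro exI[of _ "Suc (card V)"] conjI allI impI)
    fix W assume h: "W \<subseteq> V \<and> card W = Suc (card V)"
    then have "card W \<le> card V" using card_mono[OF finV[OF cg]] by blast
    then show "wtr_set V E W" using h by simp
  qed simp
  have P3: "\<forall>W. W \<subseteq> V \<and> card W = 3 \<longrightarrow> wtr_set V E W"
    using LeastI_ex[OF exr] res unfolding res_wt_def by simp
  have no2: "\<not> (\<exists>W. wtr_set V E W \<and> card W = 2)"
    using not_less_Least[of 2 "\<lambda>k. \<exists>W. wtr_set V E W \<and> card W = k"] dim unfolding dim_wt_def by simp
  have exd: "\<exists>k W. wtr_set V E W \<and> card W = k" using V_wtr[OF cg] by blast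
  have "\<exists>W. wtr_set V E W \<and> card W = 3"
    using LeastI_ex[OF exd] dim unfolding dim_wt_def by simp
  then obtain W where W: "wtr_set V E W" "card W = 3" by blast
  have n3: "3 \<le> card V" using W wtr_sub card_mono[OF finV[OF cg]] by metis
  have D2: "\<forall>v\<in>V. \<exists>a b. a \<noteq> b \<and> E v a \<and> E v b \<and> (\<forall>c. E v c \<longrightarrow> c = a \<or> c = b)"
  proof
    fix v assume v: "v \<in> V"
    have "\<not> (\<forall>a b. E v a \<longrightarrow> E v b \<longrightarrow> a = b)" using no_leaf[OF cg P3 no2 n3 v] by blast
    then obtain a b where ab: "E v a" "E v b" "a \<noteq> b" by blast
    have "\<forall>c. E v c \<longrightarrow> c = a \<or> c = b" using deg_le2[OF cg P3 no2 n3, of v a b] ab by blast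
    then show "\<exists>a b. a \<noteq> b \<and> E v a \<and> E v b \<and> (\<forall>c. E v c \<longrightarrow> c = a \<or> c = b)" using ab by blast
  qed
  have "V \<noteq> {}" using n3 by auto
  then obtain v0 where v0: "v0 \<in> V" by blast
  obtain a0 where a0: "E v0 a0" using has_nb[OF cg P3 no2 n3 v0] by blast
  have cyc: "is_cycle_graph V E" using cycle_exists[OF cg D2 v0 a0] .
  then obtain n f where nf: "3 \<le> n" "bij_betw f {0..<n} V"
    "\<forall>i<n. \<forall>j<n. E (f i) (f j) \<longleftrightarrow> (j = Suc i mod n \<or> i = Suc j mod n)"
    unfolding is_cycle_graph_def by blast
  have cV: "card V = n" using cardV[OF cg nf] .
  have "odd n"
  proof
    assume "even n"
    then obtain W' where "W' \<subseteq> V" "card W' = 3" "\<not> wtr_set V E W'" using even_bad[OF cg nf] by blast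
    then show False using P3 by blast
  qed
  then show "is_cycle_graph V E \<and> odd (card V)" using cyc cV by simp
next
  note cg = assms
  assume "is_cycle_graph V E \<and> odd (card V)"
  then obtain n f where nf: "3 \<le> n" "bij_betw f {0..<n} V"
    "\<forall>i<n. \<forall>j<n. E (f i) (f j) \<longleftrightarrow> (j = Suc i mod n \<or> i = Suc j mod n)" and o: "odd (card V)"
    unfolding is_cycle_graph_def by blast
  have "card V = n" using cardV[OF cg nf] .
  then show "randomly_weak_total_dim V E 3" using oc_random[OF cg nf] o by simp
qed



end
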